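(* For any continuous function $f:[0,1]^d\to[-1,1]$ and any $\varepsilon>0$, there exist $n\in\mathbb{N}$ and a PQC $W_b(\bm{x})$ with width $O(d\log n)$, depth $O(dn^d\log n)$ and number of trainable parameters $O(dn^d)$ such that $$|f(\bm{x})-f_{W_b}(\bm{x})|\le\varepsilon\quad\text{for all }\bm{x}\in[0,1]^d,$$ where $f_{W_b}(\bm{x}):=\langle 0|W_b^\dagger(\bm{x})Z^{(0)}W_b(\bm{x})|0\rangle$ and $Z^{(0)}$ is the Pauli $Z$ observable on the first qubit.
   Context: A parameterized quantum circuit (PQC) with input $\bm{x}=(x_1,\dots,x_d)$ is a quantum circuit on some number of qubits built from CNOT gates, Hadamard gates and single-qubit gates, where the single-qubit gates are either Pauli rotations $R_X(\theta)=e^{-i\theta X/2}$, $R_Y(\theta)$, $R_Z(\theta)=e^{-i\theta Z/2}$ whose angles $\theta$ are trainable real parameters not depending on $\bm{x}$, or data-encoding gates depending on one coordinate $x_j\in[-1,1]$, namely $S(x_j)=e^{i\arccos(x_j)X}=\begin{pmatrix} x_j & i\sqrt{1-x_j^2}\\ i\sqrt{1-x_j^2} & x_j\end{pmatrix}$. Width = number of qubits, depth = circuit depth, number of parameters = number of trainable angles. $|0\rangle$ is the all-zeros state. Asymptotic bounds hold with absolute constants. *)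

theory Defs
  imports "HOL-Analysis.Analysis"
begin

(* Quantum states on w qubits: amplitude vectors indexed by basis states
   i < 2^w; qubit q corresponds to bit q of the index (qubit 0 = first qubit). *)
type_synonym qstate = "nat \<Rightarrow> complex"

(* A 2x2 matrix: m row col, with row/column index False ~ |0>, True ~ |1>. *)
type_synonym mat2 = "bool \<Rightarrow> bool \<Rightarrow> complex"

(* Gates.  RX q k : rotation R_X(theta k) on qubit q, where theta is the
   vector of trainable parameters and k the index of the parameter used.
   Enc q j : data-encoding gate S(x_j) on qubit q. *)
datatype gate =
    CNOT nat nat   (* control, target *)
  | Had nat
  | RX nat nat
  | RY nat nat
  | RZ nat nat
  | Enc nat nat

definition apply1 :: "mat2 \<Rightarrow> nat \<Rightarrow> qstate \<Rightarrow> qstate" where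
  "apply1 m q \<psi> = (\<lambda>i. m (bit i q) False * \<psi> (unset_bit q i)
                        + m (bit i q) True * \<psi> (set_bit q i))"

definition apply_cnot :: "nat \<Rightarrow> nat \<Rightarrow> qstate \<Rightarrow> qstate" where
  "apply_cnot c t \<psi> = (\<lambda>i. \<psi> (if bit i c then flip_bit t i else i))"

definition rx_mat :: "real \<Rightarrow> mat2" where
  "rx_mat \<theta> = (\<lambda>r c. if r = c then complex_of_real (cos (\<theta>/2))
                     else - \<i> * complex_of_real (sin (\<theta>/2)))"

definition ry_mat :: "real \<Rightarrow> mat2" where
  "ry_mat \<theta> = (\<lambda>r c. if r = c then complex_of_real (cos (\<theta>/2))
                     else if r then complex_of_real (sin (\<theta>/2))
                     else - complex_of_real (sin (\<theta>/2)))"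

definition rz_mat :: "real \<Rightarrow> mat2" where
  "rz_mat \<theta> = (\<lambda>r c. if r \<noteq> c then 0
                     else if r then exp (\<i> * complex_of_real (\<theta>/2))
                     else exp (- \<i> * complex_of_real (\<theta>/2)))"

definition had_mat :: mat2 where
  "had_mat = (\<lambda>r c. if r \<and> c then - complex_of_real (1 / sqrt 2)
                   else complex_of_real (1 / sqrt 2))"

(* S(x) = exp(i arccos(x) X) = [[x, i sqrt(1-x^2)], [i sqrt(1-x^2), x]] *)
definition enc_mat :: "real \<Rightarrow> mat2" where
  "enc_mat x = (\<lambda>r c. if r = c then complex_of_real x
                     else \<i> * complex_of_real (sqrt (1 - x\<^sup>2)))"

primrec gate_sem :: "(nat \<Rightarrow> real) \<Rightarrow> (nat \<Rightarrow> real) \<Rightarrow> gate \<Rightarrow> qstate \<Rightarrow> qstate" where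
  "gate_sem \<theta> x (CNOT c t) = apply_cnot c t"
| "gate_sem \<theta> x (Had q) = apply1 had_mat q"
| "gate_sem \<theta> x (RX q k) = apply1 (rx_mat (\<theta> k)) q"
| "gate_sem \<theta> x (RY q k) = apply1 (ry_mat (\<theta> k)) q"
| "gate_sem \<theta> x (RZ q k) = apply1 (rz_mat (\<theta> k)) q"
| "gate_sem \<theta> x (Enc q j) = apply1 (enc_mat (x j)) q"

primrec gate_qubits :: "gate \<Rightarrow> nat set" where
  "gate_qubits (CNOT c t) = {c, t}"
| "gate_qubits (Had q) = {q}"
| "gate_qubits (RX q k) = {q}"
| "gate_qubits (RY q k) = {q}"
| "gate_qubits (RZ q k) = {q}"
| "gate_qubits (Enc q j) = {q}"

primrec gate_params :: "gate \<Rightarrow> nat set" where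
  "gate_params (CNOT c t) = {}"
| "gate_params (Had q) = {}"
| "gate_params (RX q k) = {k}"
| "gate_params (RY q k) = {k}"
| "gate_params (RZ q k) = {k}"
| "gate_params (Enc q j) = {}"

definition valid_gate :: "nat \<Rightarrow> nat \<Rightarrow> gate \<Rightarrow> bool" where
  "valid_gate w d g \<longleftrightarrow> (\<forall>q\<in>gate_qubits g. q < w)
     \<and> (\<forall>c t. g = CNOT c t \<longrightarrow> c \<noteq> t)
     \<and> (\<forall>q j. g = Enc q j \<longrightarrow> j < d)"

(* A circuit is a list of layers (applied in list order); each layer is a list of
   gates acting on pairwise disjoint qubits.  Depth = number of layers. *)
definition valid_circuit :: "nat \<Rightarrow> nat \<Rightarrow> gate list list \<Rightarrow> bool" where
  "valid_circuit w d layers \<longleftrightarrow> 0 < w \<and>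
     (\<forall>L\<in>set layers. (\<forall>g\<in>set L. valid_gate w d g) \<and>
        (\<forall>i<length L. \<forall>j<length L. i \<noteq> j \<longrightarrow> gate_qubits (L!i) \<inter> gate_qubits (L!j) = {}))"

definition circuit_depth :: "gate list list \<Rightarrow> nat" where
  "circuit_depth layers = length layers"

definition num_params :: "gate list list \<Rightarrow> nat" where
  "num_params layers = card (\<Union>L\<in>set layers. \<Union>g\<in>set L. gate_params g)"

definition init_state :: qstate where
  "init_state = (\<lambda>i. if i = 0 then 1 else 0)"

definition run_circuit :: "(nat \<Rightarrow> real) \<Rightarrow> (nat \<Rightarrow> real) \<Rightarrow> gate list list \<Rightarrow> qstate" where
  "run_circuit \<theta> x layers =
     foldl (\<lambda>\<psi> L. foldl (\<lambda>\<phi> g. gate_sem \<theta> x g \<phi>) \<psi> L) init_state layers"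

definition expect_Z0 :: "nat \<Rightarrow> qstate \<Rightarrow> real" where
  "expect_Z0 w \<psi> = (\<Sum>i<2^w. (if bit i 0 then -1 else 1) * (cmod (\<psi> i))\<^sup>2)"

definition pqc_fn :: "nat \<Rightarrow> (nat \<Rightarrow> real) \<Rightarrow> gate list list \<Rightarrow> (nat \<Rightarrow> real) \<Rightarrow> real" where
  "pqc_fn w \<theta> layers x = expect_Z0 w (run_circuit \<theta> x layers)"

definition unit_cube :: "nat \<Rightarrow> (nat \<Rightarrow> real) set" where
  "unit_cube d = {x. \<forall>j. (j < d \<longrightarrow> 0 \<le> x j \<and> x j \<le> 1) \<and> (d \<le> j \<longrightarrow> x j = 0)}"

end

theory Submission
  imports Defs
begin



lemma unit_cube_PiE: "unit_cube d = PiE UNIV (\<lambda>j. if j < d then {0..1} else {0::real})"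
proof (rule set_eqI)
  fix x :: "nat \<Rightarrow> real"
  show "x \<in> unit_cube d \<longleftrightarrow> x \<in> PiE UNIV (\<lambda>j. if j < d then {0..1} else {0::real})"
    unfolding PiE_UNIV_domain Pi_iff unit_cube_def mem_Collect_eq
    by (metis UNIV_I atLeastAtMost_iff not_le singletonD singletonI)
qed

lemma compact_unit_cube: "compact (unit_cube d)"
proof -
  have "compactin (product_topology (\<lambda>i. euclidean) UNIV) (PiE UNIV (\<lambda>j. if j < d then {0..1} else {0::real}))"
    by (subst compactin_PiE) auto
  then show ?thesis unfolding unit_cube_PiE euclidean_product_topology by simp
qed

lemma dist_small:
  fixes x z :: "nat \<Rightarrow> real"
  assumes "\<And>j. \<bar>x j - z j\<bar> \<le> \<eta>" "0 < \<eta>"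
  shows "dist x z < 3 * \<eta>"
proof -
  obtain N where N: "(1/2::real)^N < \<eta>" using real_arch_pow_inv[of \<eta> "1/2"] assms(2) by auto
  have "Max {dist (x (from_nat n)) (z (from_nat n))|n. n \<le> N} \<le> \<eta>"
  proof (rule Max.boundedI)
    have "{dist (x (from_nat n)) (z (from_nat n))|n. n \<le> N} = (\<lambda>n. dist (x (from_nat n)) (z (from_nat n))) ` {..N}" by auto
    then show "finite {dist (x (from_nat n)) (z (from_nat n))|n. n \<le> N}" by simp
    show "{dist (x (from_nat n)) (z (from_nat n))|n. n \<le> N} \<noteq> {}" by auto
    show "\<And>a. a \<in> {dist (x (from_nat n)) (z (from_nat n))|n. n \<le> N} \<Longrightarrow> a \<le> \<eta>"
      using assms(1) by (auto simp: dist_real_def)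
  qed
  then show ?thesis using dist_fun_le_dist_first_terms[of x z N] N by linarith
qed

lemma unif_cube:
  assumes "continuous_on (unit_cube d) f" "0 < \<epsilon>"
  shows "\<exists>\<eta>>0. \<forall>x\<in>unit_cube d. \<forall>z\<in>unit_cube d. (\<forall>j<d. \<bar>x j - z j\<bar> \<le> \<eta>) \<longrightarrow> \<bar>f x - f z\<bar> < (\<epsilon>::real)"
proof -
  have "uniformly_continuous_on (unit_cube d) f"
    using compact_uniformly_continuous[OF assms(1) compact_unit_cube] .
  then obtain \<delta> where d: "\<delta> > 0" "\<forall>x\<in>unit_cube d. \<forall>x'\<in>unit_cube d. dist x' x < \<delta> \<longrightarrow> dist (f x') (f x) < \<epsilon>"
    unfolding uniformly_continuous_on_def using assms(2) by metis
  show ?thesis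
  proof (rule exI[of _ "\<delta>/3"], intro conjI ballI impI)
    show "\<delta>/3 > 0" using d(1) by simp
  next
    fix x z assume xz: "x \<in> unit_cube d" "z \<in> unit_cube d" "\<forall>j<d. \<bar>x j - z j\<bar> \<le> \<delta>/3"
    have "\<And>j. \<bar>x j - z j\<bar> \<le> \<delta>/3"
    proof -
      fix j show "\<bar>x j - z j\<bar> \<le> \<delta>/3"
        using xz d(1) by (cases "j < d") (auto simp: unit_cube_def)
    qed
    then have "dist x z < \<delta>" using dist_small[of x z "\<delta>/3"] d(1) by auto
    then show "\<bar>f x - f z\<bar> < \<epsilon>" using d(2) xz by (auto simp: dist_real_def)
  qed
qed



definition mv :: "mat2 \<Rightarrow> (bool \<Rightarrow> complex) \<Rightarrow> bool \<Rightarrow> complex" where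
  "mv M v = (\<lambda>r. M r False * v False + M r True * v True)"

definition prod_state :: "nat \<Rightarrow> (nat \<Rightarrow> bool \<Rightarrow> complex) \<Rightarrow> qstate" where
  "prod_state w v = (\<lambda>i. if i < 2^w then (\<Prod>q<w. v q (bit i q)) else 0)"

lemma nat_zero_bits: assumes "\<forall>q. \<not> bit (i::nat) q" shows "i = 0"
proof (rule bit_eqI)
  fix q assume "possible_bit TYPE(nat) q"
  show "bit i q \<longleftrightarrow> bit (0::nat) q" using assms by simp
qed

lemma lt_pow_bits: "(n::nat) < 2^w \<longleftrightarrow> (\<forall>r\<ge>w. \<not> bit n r)"
proof
  assume A: "n < 2^w"
  show "\<forall>r\<ge>w. \<not> bit n r"
  proof (intro allI impI)
    fix r assume "w \<le> r"
    then have "(2::nat)^w \<le> 2^r" by (simp add: power_increasing)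
    then have "n < 2^r" using A by linarith
    then have "n div 2^r = 0" by simp
    then show "\<not> bit n r" by (simp add: bit_iff_odd)
  qed
next
  assume H: "\<forall>r\<ge>w. \<not> bit n r"
  have "drop_bit w n = 0" by (rule nat_zero_bits) (use H in \<open>auto simp: bit_drop_bit_eq\<close>)
  hence "n = take_bit w n" using bits_ident[of w n] by simp
  then show "n < 2^w" by (metis take_bit_nat_less_exp)
qed

lemma set_bit_lt: "q < w \<Longrightarrow> set_bit q (n::nat) < 2^w \<longleftrightarrow> n < 2^w"
  unfolding lt_pow_bits by (auto simp: bit_set_bit_iff)

lemma unset_bit_lt: "q < w \<Longrightarrow> unset_bit q (n::nat) < 2^w \<longleftrightarrow> n < 2^w"
  unfolding lt_pow_bits by (auto simp: bit_unset_bit_iff)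

lemma prod_split_q:
  assumes "q < (w::nat)"
  shows "(\<Prod>r<w. g r (h r) :: complex) = g q (h q) * (\<Prod>r\<in>{..<w}-{q}. g r (h r))"
  using assms by (intro prod.remove) auto

lemma apply1_prod:
  assumes "q < w"
  shows "apply1 M q (prod_state w v) = prod_state w (v(q := mv M (v q)))"
proof (rule ext)
  fix i :: nat
  show "apply1 M q (prod_state w v) i = prod_state w (v(q := mv M (v q))) i"
  proof (cases "i < 2^w")
    case True
    have A: "(\<Prod>r<w. v r (bit (set_bit q i) r)) = v q True * (\<Prod>r\<in>{..<w}-{q}. v r (bit i r))"
      by (subst prod_split_q[OF assms]) (auto simp: bit_set_bit_iff intro!: prod.cong)
    have B: "(\<Prod>r<w. v r (bit (unset_bit q i) r)) = v q False * (\<Prod>r\<in>{..<w}-{q}. v r (bit i r))"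
      by (subst prod_split_q[OF assms]) (auto simp: bit_unset_bit_iff intro!: prod.cong)
    have C: "(\<Prod>r<w. (v(q := mv M (v q))) r (bit i r)) = mv M (v q) (bit i q) * (\<Prod>r\<in>{..<w}-{q}. v r (bit i r))"
      by (subst prod_split_q[OF assms]) (auto intro!: prod.cong)
    show ?thesis using True assms A B C
      by (simp add: apply1_def prod_state_def set_bit_lt unset_bit_lt mv_def algebra_simps)
  next
    case False
    then show ?thesis using assms
      by (simp add: apply1_def prod_state_def set_bit_lt unset_bit_lt)
  qed
qed


definition e0 :: "bool \<Rightarrow> complex" where "e0 = (\<lambda>b. if b then 0 else 1)"

lemma init_prod: "init_state = prod_state w (\<lambda>q. e0)"
proof (rule ext)
  fix i :: nat
  show "init_state i = prod_state w (\<lambda>q. e0) i"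
  proof (cases "i = 0")
    case True then show ?thesis by (simp add: init_state_def prod_state_def e0_def)
  next
    case False
    then obtain q where q: "bit i q" using nat_zero_bits by blast
    show ?thesis
    proof (cases "i < 2^w")
      case True
      then have "q < w" using q lt_pow_bits not_le by blast
      then have "(\<Prod>r<w. e0 (bit i r)) = 0"
        by (intro prod_zero) (use q in \<open>auto simp: e0_def\<close>)
      then show ?thesis using True False by (simp add: init_state_def prod_state_def)
    qed (use False in \<open>simp add: init_state_def prod_state_def\<close>)
  qed
qed

definition enc_gates :: "nat \<Rightarrow> nat \<Rightarrow> gate list" where
  "enc_gates N m = map (\<lambda>k. Enc (Suc k) (k div N)) [0..<m]"

definition v1 :: "(nat \<Rightarrow> real) \<Rightarrow> nat \<Rightarrow> nat \<Rightarrow> nat \<Rightarrow> bool \<Rightarrow> complex" where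
  "v1 x N m' = (\<lambda>q. if 1 \<le> q \<and> q \<le> m' then mv (enc_mat (x ((q-1) div N))) e0 else e0)"

lemma phase1:
  "m' \<le> m \<Longrightarrow> foldl (\<lambda>\<psi> g. gate_sem \<theta> x g \<psi>) (prod_state (Suc m) (\<lambda>q. e0)) (map (\<lambda>k. Enc (Suc k) (k div N)) [0..<m'])
     = prod_state (Suc m) (v1 x N m')"
proof (induction m')
  case 0
  have "v1 x N 0 = (\<lambda>q. e0)" by (rule ext) (auto simp: v1_def)
  then show ?case by simp
next
  case (Suc m')
  have "v1 x N (Suc m') = (v1 x N m')(Suc m' := mv (enc_mat (x (m' div N))) (v1 x N m' (Suc m')))"
  proof (rule ext)
    fix q
    show "v1 x N (Suc m') q = ((v1 x N m')(Suc m' := mv (enc_mat (x (m' div N))) (v1 x N m' (Suc m')))) q"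
    proof (cases "q = Suc m'")
      case True
      have a: "v1 x N m' (Suc m') = e0" by (simp add: v1_def)
      have b: "v1 x N (Suc m') (Suc m') = mv (enc_mat (x (m' div N))) e0" by (simp add: v1_def)
      show ?thesis unfolding True a b by simp
    next
      case False
      then show ?thesis by (simp add: v1_def le_Suc_eq)
    qed
  qed
  note eq = this
  have "foldl (\<lambda>\<psi> g. gate_sem \<theta> x g \<psi>) (prod_state (Suc m) (\<lambda>q. e0)) (map (\<lambda>k. Enc (Suc k) (k div N)) [0..<Suc m'])
     = apply1 (enc_mat (x (m' div N))) (Suc m') (prod_state (Suc m) (v1 x N m'))"
    using Suc by simp
  also have "\<dots> = prod_state (Suc m) ((v1 x N m')(Suc m' := mv (enc_mat (x (m' div N))) (v1 x N m' (Suc m'))))"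
    by (rule apply1_prod) (use Suc in simp)
  finally show ?case unfolding eq[symmetric] .
qed

definition Pst :: "nat \<Rightarrow> (nat \<Rightarrow> bool \<Rightarrow> complex) \<Rightarrow> nat \<Rightarrow> complex" where
  "Pst m v b = (if b < 2^m then (\<Prod>k<m. v (Suc k) (bit b k)) else 0)"

lemma prod_to_ctrl: "prod_state (Suc m) v = (\<lambda>i. Pst m v (i div 2) * v 0 (odd i))"
proof (rule ext)
  fix i :: nat
  have lt: "i < 2^Suc m \<longleftrightarrow> i div 2 < 2^m" by (simp add: div_less_iff_less_mult mult.commute)
  show "prod_state (Suc m) v i = Pst m v (i div 2) * v 0 (odd i)"
    unfolding prod_state_def Pst_def lt
    by (simp only: prod.lessThan_Suc_shift bit_0 bit_Suc) (simp add: mult.commute)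
qed

definition flipc :: "bool \<Rightarrow> (bool \<Rightarrow> complex) \<Rightarrow> bool \<Rightarrow> complex" where
  "flipc p v = (if p then (\<lambda>t. v (\<not> t)) else v)"

lemma apply1_ctrl:
  "apply1 M 0 (\<lambda>i. P (i div 2) * T (i div 2) (odd i)) = (\<lambda>i. P (i div 2) * mv M (T (i div 2)) (odd i))"
  by (rule ext) (simp add: apply1_def unset_bit_0 set_bit_0 bit_0 mv_def algebra_simps)

lemma cnot_ctrl:
  "apply_cnot (Suc c) 0 (\<lambda>i. P (i div 2) * T (i div 2) (odd i)) = (\<lambda>i. P (i div 2) * flipc (bit (i div 2) c) (T (i div 2)) (odd i))"
  by (rule ext) (simp add: apply_cnot_def flip_bit_0 bit_Suc flipc_def)


lemma ry_add: "mv (ry_mat a) (mv (ry_mat c) V) = mv (ry_mat (a + c)) V"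
proof (rule ext)
  fix r :: bool
  have cs: "complex_of_real (cos ((a + c)/2)) = of_real (cos (a/2)) * of_real (cos (c/2)) - of_real (sin (a/2)) * of_real (sin (c/2))"
    using cos_add[of "a/2" "c/2"] by (simp add: add_divide_distrib)
  have sn: "complex_of_real (sin ((a + c)/2)) = of_real (sin (a/2)) * of_real (cos (c/2)) + of_real (cos (a/2)) * of_real (sin (c/2))"
    using sin_add[of "a/2" "c/2"] by (simp add: add_divide_distrib)
  show "mv (ry_mat a) (mv (ry_mat c) V) r = mv (ry_mat (a + c)) V r"
    by (cases r) (simp_all only: mv_def ry_mat_def cs sn if_True if_False simp_thms, simp_all add: algebra_simps)
qed

lemma ry_flip: "flipc p (mv (ry_mat a) (flipc p V)) = mv (ry_mat (if p then - a else a)) V"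
  by (rule ext) (auto simp: flipc_def mv_def ry_mat_def algebra_simps)

lemma mod_Suc_bit: "(b::nat) mod 2^Suc m = b mod 2^m + (if bit b m then 2^m else 0)"
  using take_bit_Suc_from_most[of m b] by (simp add: take_bit_eq_mod)

fun ucirc :: "nat \<Rightarrow> nat \<Rightarrow> gate list" where
  "ucirc 0 s = [RY 0 s]"
| "ucirc (Suc m) s = ucirc m s @ [CNOT (Suc m) 0] @ ucirc m (s + 2^m) @ [CNOT (Suc m) 0]"

fun uth :: "nat \<Rightarrow> (nat \<Rightarrow> real) \<Rightarrow> nat \<Rightarrow> nat \<Rightarrow> real" where
  "uth 0 \<phi> s = (\<lambda>k. \<phi> 0)"
| "uth (Suc m) \<phi> s = (\<lambda>k. if k < s + 2^m then uth m (\<lambda>b. (\<phi> b + \<phi> (b + 2^m))/2) s k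
                         else uth m (\<lambda>b. (\<phi> b - \<phi> (b + 2^m))/2) (s + 2^m) k)"

abbreviation run_gates :: "(nat \<Rightarrow> real) \<Rightarrow> (nat \<Rightarrow> real) \<Rightarrow> qstate \<Rightarrow> gate list \<Rightarrow> qstate" where
  "run_gates \<theta> x \<equiv> foldl (\<lambda>\<psi> g. gate_sem \<theta> x g \<psi>)"

lemma ucirc_sem:
  "(\<forall>k. s \<le> k \<and> k < s + 2^m \<longrightarrow> \<theta> k = uth m \<phi> s k) \<Longrightarrow>
   run_gates \<theta> x (\<lambda>i. P (i div 2) * T (i div 2) (odd i)) (ucirc m s)
   = (\<lambda>i. P (i div 2) * mv (ry_mat (\<phi> ((i div 2) mod 2^m))) (T (i div 2)) (odd i))"
proof (induction m arbitrary: \<phi> s T)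
  case 0
  then have "\<theta> s = \<phi> 0" by simp
  then show ?case by (simp add: apply1_ctrl)
next
  case (Suc m)
  define u where "u = (\<lambda>b. (\<phi> b + \<phi> (b + 2^m))/2)"
  define v where "v = (\<lambda>b. (\<phi> b - \<phi> (b + 2^m))/2)"
  have h1: "\<forall>k. s \<le> k \<and> k < s + 2^m \<longrightarrow> \<theta> k = uth m u s k"
    using Suc.prems by (auto simp: u_def)
  have h2: "\<forall>k. s + 2^m \<le> k \<and> k < s + 2^m + 2^m \<longrightarrow> \<theta> k = uth m v (s + 2^m) k"
    using Suc.prems by (auto simp: v_def)
  define T1 where "T1 = (\<lambda>b. mv (ry_mat (u (b mod 2^m))) (T b))"
  define T2 where "T2 = (\<lambda>b. flipc (bit b m) (T1 b))"
  define T3 where "T3 = (\<lambda>b. mv (ry_mat (v (b mod 2^m))) (T2 b))"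
  define T4 where "T4 = (\<lambda>b. flipc (bit b m) (T3 b))"
  have s1: "run_gates \<theta> x (\<lambda>i. P (i div 2) * T (i div 2) (odd i)) (ucirc m s) = (\<lambda>i. P (i div 2) * T1 (i div 2) (odd i))"
    using Suc.IH[OF h1] unfolding T1_def .
  have s2: "gate_sem \<theta> x (CNOT (Suc m) 0) (\<lambda>i. P (i div 2) * T1 (i div 2) (odd i)) = (\<lambda>i. P (i div 2) * T2 (i div 2) (odd i))"
    unfolding T2_def by (simp add: cnot_ctrl)
  have s3: "run_gates \<theta> x (\<lambda>i. P (i div 2) * T2 (i div 2) (odd i)) (ucirc m (s + 2^m)) = (\<lambda>i. P (i div 2) * T3 (i div 2) (odd i))"
    using Suc.IH[OF h2, of T2] unfolding T3_def .
  have s4: "gate_sem \<theta> x (CNOT (Suc m) 0) (\<lambda>i. P (i div 2) * T3 (i div 2) (odd i)) = (\<lambda>i. P (i div 2) * T4 (i div 2) (odd i))"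
    unfolding T4_def by (simp add: cnot_ctrl)
  have T4eq: "T4 b = mv (ry_mat (\<phi> (b mod 2^Suc m))) (T b)" for b
  proof -
    have "T4 b = mv (ry_mat ((if bit b m then - v (b mod 2^m) else v (b mod 2^m)) + u (b mod 2^m))) (T b)"
      unfolding T4_def T3_def T2_def T1_def by (simp only: ry_flip ry_add)
    also have "(if bit b m then - v (b mod 2^m) else v (b mod 2^m)) + u (b mod 2^m) = \<phi> (b mod 2^Suc m)"
      unfolding mod_Suc_bit u_def v_def by (cases "bit b m") (simp_all add: field_simps)
    finally show ?thesis .
  qed
  have "run_gates \<theta> x (\<lambda>i. P (i div 2) * T (i div 2) (odd i)) (ucirc (Suc m) s) =
     gate_sem \<theta> x (CNOT (Suc m) 0) (run_gates \<theta> x (gate_sem \<theta> x (CNOT (Suc m) 0)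
        (run_gates \<theta> x (\<lambda>i. P (i div 2) * T (i div 2) (odd i)) (ucirc m s))) (ucirc m (s + 2^m)))"
    by (simp del: gate_sem.simps)
  also have "\<dots> = (\<lambda>i. P (i div 2) * T4 (i div 2) (odd i))" by (simp only: s1 s2 s3 s4)
  also have "\<dots> = (\<lambda>i. P (i div 2) * mv (ry_mat (\<phi> ((i div 2) mod 2^Suc m))) (T (i div 2)) (odd i))"
    by (simp only: T4eq)
  finally show ?case .
qed


lemma ucirc_gates:
  "g \<in> set (ucirc m s) \<Longrightarrow> (\<exists>k. g = RY 0 k \<and> s \<le> k \<and> k < s + 2^m) \<or> (\<exists>k<m. g = CNOT (Suc k) 0)"
proof (induction m arbitrary: s)
  case 0 then show ?case by simp
next
  case (Suc m)
  from Suc.prems consider "g \<in> set (ucirc m s)" | "g \<in> set (ucirc m (s + 2^m))" | "g = CNOT (Suc m) 0"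
    by auto
  then show ?case
  proof cases
    case 1 then show ?thesis using Suc.IH[of s] by fastforce
  next
    case 2 then show ?thesis using Suc.IH[of "s + 2^m"] by fastforce
  next
    case 3 then show ?thesis by blast
  qed
qed

lemma ucirc_length: "length (ucirc m s) + 2 = 3 * 2^m"
  by (induction m arbitrary: s) auto

lemma run_circuit_singletons:
  "run_circuit \<theta> x (map (\<lambda>g. [g]) gs) = run_gates \<theta> x init_state gs"
  by (simp add: run_circuit_def foldl_map)

lemma sum_pairs: "(\<Sum>i<2*n. F i) = (\<Sum>b<n. F (2*b) + F (2*b+1 :: nat))"
  by (induction n) (simp_all add: sum.distrib ac_simps)

definition W :: "(nat \<Rightarrow> real) \<Rightarrow> nat \<Rightarrow> nat \<Rightarrow> real" where
  "W y m b = (\<Prod>k<m. if bit b k then 1 - y k else y k)"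

lemma mv_enc_e0: "mv (enc_mat a) e0 = (\<lambda>t. if t then \<i> * complex_of_real (sqrt (1 - a\<^sup>2)) else complex_of_real a)"
  by (rule ext) (simp add: mv_def enc_mat_def e0_def)

lemma mv_ry_e0: "mv (ry_mat a) e0 = (\<lambda>t. if t then complex_of_real (sin (a/2)) else complex_of_real (cos (a/2)))"
  by (rule ext) (simp add: mv_def ry_mat_def e0_def)

lemma cmod_enc:
  assumes "0 \<le> a" "a \<le> 1"
  shows "(cmod (mv (enc_mat a) e0 t))\<^sup>2 = (if t then 1 - a\<^sup>2 else a\<^sup>2)"
proof -
  have "a\<^sup>2 \<le> 1" using assms by (simp add: power_le_one)
  then show ?thesis by (simp add: mv_enc_e0 norm_mult)
qed

lemma full_circuit:
  fixes x :: "nat \<Rightarrow> real"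
  assumes x: "\<And>j. 0 \<le> x j \<and> x j \<le> 1"
  shows "pqc_fn (Suc m) (uth m \<phi> 0) (map (\<lambda>g. [g]) (enc_gates N m @ ucirc m 0)) x
       = (\<Sum>b<2^m. W (\<lambda>k. (x (k div N))\<^sup>2) m b * cos (\<phi> b))"
proof -
  define \<theta> where "\<theta> = uth m \<phi> 0"
  define P where "P = Pst m (v1 x N m)"
  have e1: "run_gates \<theta> x init_state (enc_gates N m) = (\<lambda>i. P (i div 2) * e0 (odd i))"
  proof -
    have "run_gates \<theta> x init_state (enc_gates N m) = prod_state (Suc m) (v1 x N m)"
      unfolding init_prod[of "Suc m"] enc_gates_def by (rule phase1) simp
    also have "\<dots> = (\<lambda>i. P (i div 2) * e0 (odd i))"
      unfolding prod_to_ctrl P_def by (simp add: v1_def)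
    finally show ?thesis .
  qed
  have e2: "run_gates \<theta> x (\<lambda>i. P (i div 2) * e0 (odd i)) (ucirc m 0)
      = (\<lambda>i. P (i div 2) * mv (ry_mat (\<phi> ((i div 2) mod 2^m))) e0 (odd i))"
    using ucirc_sem[of 0 m \<theta> \<phi> x P "\<lambda>b. e0"] unfolding \<theta>_def by simp
  define \<psi> where "\<psi> = (\<lambda>i. P (i div 2) * mv (ry_mat (\<phi> ((i div 2) mod 2^m))) e0 (odd i))"
  have run: "run_circuit \<theta> x (map (\<lambda>g. [g]) (enc_gates N m @ ucirc m 0)) = \<psi>"
    unfolding run_circuit_singletons foldl_append e1 e2 \<psi>_def ..
  have Pb: "(cmod (P b))\<^sup>2 = W (\<lambda>k. (x (k div N))\<^sup>2) m b" if "b < 2^m" for b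
  proof -
    have "(cmod (P b))\<^sup>2 = (\<Prod>k<m. (cmod (v1 x N m (Suc k) (bit b k)))\<^sup>2)"
      using that by (simp add: P_def Pst_def prod_norm[symmetric] prod_power_distrib)
    also have "\<dots> = (\<Prod>k<m. if bit b k then 1 - (x (k div N))\<^sup>2 else (x (k div N))\<^sup>2)"
    proof (rule prod.cong)
      fix k assume "k \<in> {..<m}"
      then have "v1 x N m (Suc k) = mv (enc_mat (x (k div N))) e0" by (simp add: v1_def)
      then show "(cmod (v1 x N m (Suc k) (bit b k)))\<^sup>2 = (if bit b k then 1 - (x (k div N))\<^sup>2 else (x (k div N))\<^sup>2)"
        using cmod_enc[of "x (k div N)" "bit b k"] x by simp
    qed simp
    finally show ?thesis by (simp add: W_def)
  qed
  have "pqc_fn (Suc m) \<theta> (map (\<lambda>g. [g]) (enc_gates N m @ ucirc m 0)) x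
      = (\<Sum>i<2*2^m. (if bit i 0 then -1 else 1) * (cmod (\<psi> i))\<^sup>2)"
    unfolding pqc_fn_def expect_Z0_def run by simp
  also have "\<dots> = (\<Sum>b<2^m. W (\<lambda>k. (x (k div N))\<^sup>2) m b * cos (\<phi> b))"
    unfolding sum_pairs
  proof (rule sum.cong)
    fix b assume b: "b \<in> {..<(2::nat)^m}"
    have c2: "cos (\<phi> b) = (cos (\<phi> b / 2))\<^sup>2 - (sin (\<phi> b / 2))\<^sup>2"
      using cos_double[of "\<phi> b / 2"] by simp
    have "(2 * b) div 2 = b" "(2 * b + 1) div 2 = b" by auto
    then show "(if bit (2 * b) 0 then -1 else 1) * (cmod (\<psi> (2 * b)))\<^sup>2 + (if bit (2 * b + 1) 0 then -1 else 1) * (cmod (\<psi> (2 * b + 1)))\<^sup>2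
        = W (\<lambda>k. (x (k div N))\<^sup>2) m b * cos (\<phi> b)"
      using b Pb[of b] unfolding \<psi>_def c2 by (simp add: mv_ry_e0 norm_mult power_mult_distrib algebra_simps bit_0)
  qed simp
  finally show ?thesis unfolding \<theta>_def .
qed



lemma sum_pow_Suc: "(\<Sum>b<2^Suc m. F b) = (\<Sum>b<2^m. F (2*b) + F (2*b+1 :: nat))"
  using sum_pairs[of F "2^m"] by simp

lemma W_Suc: "W y (Suc m) b = (if odd b then 1 - y 0 else y 0) * W (\<lambda>k. y (Suc k)) m (b div 2)"
  unfolding W_def prod.lessThan_Suc_shift by (simp add: bit_0 bit_Suc)

lemma W_even: "W y (Suc m) (2*b) = y 0 * W (\<lambda>k. y (Suc k)) m b"
  by (simp add: W_Suc)

lemma W_odd: "W y (Suc m) (2*b+1) = (1 - y 0) * W (\<lambda>k. y (Suc k)) m b"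
  by (simp add: W_Suc)

lemma W_sum: "(\<Sum>b<2^m. W y m b) = 1"
proof (induction m arbitrary: y)
  case 0 then show ?case by (simp add: W_def)
next
  case (Suc m)
  have "(\<Sum>b<2^Suc m. W y (Suc m) b) = (\<Sum>b<2^m. y 0 * W (\<lambda>k. y (Suc k)) m b + (1 - y 0) * W (\<lambda>k. y (Suc k)) m b)"
    unfolding sum_pow_Suc W_even W_odd ..
  also have "\<dots> = (\<Sum>b<2^m. W (\<lambda>k. y (Suc k)) m b)" by (simp add: algebra_simps)
  finally show ?case using Suc.IH by simp
qed

lemma W_nonneg: "(\<And>k. 0 \<le> y k \<and> y k \<le> 1) \<Longrightarrow> 0 \<le> W y m b"
  unfolding W_def by (intro prod_nonneg) auto

definition Zc :: "nat set \<Rightarrow> nat \<Rightarrow> nat \<Rightarrow> real" where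
  "Zc S m b = (\<Sum>k<m. if k \<in> S \<and> \<not> bit b k then 1 else 0)"

definition ns :: "nat set \<Rightarrow> nat \<Rightarrow> real" where
  "ns S m = (\<Sum>k<m. if k \<in> S then 1 else 0)"

lemma Zc_even: "Zc S (Suc m) (2*b) = (if 0 \<in> S then 1 else 0) + Zc {k. Suc k \<in> S} m b"
  unfolding Zc_def sum.lessThan_Suc_shift by (simp add: bit_0 bit_Suc)

lemma Zc_odd: "Zc S (Suc m) (2*b+1) = Zc {k. Suc k \<in> S} m b"
  unfolding Zc_def sum.lessThan_Suc_shift by (simp add: bit_0 bit_Suc)

lemma ns_Suc: "ns S (Suc m) = (if 0 \<in> S then 1 else 0) + ns {k. Suc k \<in> S} m"
  unfolding ns_def sum.lessThan_Suc_shift by simp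

lemma Zc_bounds: "0 \<le> Zc S m b \<and> Zc S m b \<le> ns S m"
  unfolding Zc_def ns_def by (auto intro!: sum_nonneg sum_mono)

lemma W_var:
  assumes "\<forall>k\<in>S. y k = c"
  shows "(\<Sum>b<2^m. W y m b * (Zc S m b - ns S m * c)\<^sup>2) = ns S m * c * (1 - c)"
  using assms
proof (induction m arbitrary: y S)
  case 0 then show ?case by (simp add: W_def Zc_def ns_def)
next
  case (Suc m)
  define y' where "y' = (\<lambda>k. y (Suc k))"
  define S' where "S' = {k. Suc k \<in> S}"
  define D where "D = (\<lambda>b. Zc S' m b - ns S' m * c)"
  define e where "e = (if 0 \<in> S then c * (1 - c) else 0)"
  have IH: "(\<Sum>b<2^m. W y' m b * (D b)\<^sup>2) = ns S' m * c * (1 - c)"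
    unfolding D_def y'_def S'_def using Suc.IH[of "{k. Suc k \<in> S}" "\<lambda>k. y (Suc k)"] Suc.prems by auto
  have "(\<Sum>b<2^Suc m. W y (Suc m) b * (Zc S (Suc m) b - ns S (Suc m) * c)\<^sup>2)
     = (\<Sum>b<2^m. W y (Suc m) (2*b) * (Zc S (Suc m) (2*b) - ns S (Suc m) * c)\<^sup>2
               + W y (Suc m) (2*b+1) * (Zc S (Suc m) (2*b+1) - ns S (Suc m) * c)\<^sup>2)"
    by (rule sum_pow_Suc)
  also have "\<dots> = (\<Sum>b<2^m. W y' m b * (D b)\<^sup>2 + e * W y' m b)"
  proof (rule sum.cong[OF refl])
    fix b
    show "W y (Suc m) (2*b) * (Zc S (Suc m) (2*b) - ns S (Suc m) * c)\<^sup>2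
               + W y (Suc m) (2*b+1) * (Zc S (Suc m) (2*b+1) - ns S (Suc m) * c)\<^sup>2
          = W y' m b * (D b)\<^sup>2 + e * W y' m b"
    proof (cases "0 \<in> S")
      case True
      then have y0: "y 0 = c" using Suc.prems by auto
      show ?thesis unfolding W_even W_odd Zc_even Zc_odd ns_Suc D_def e_def y'_def S'_def
        using True y0 by (simp add: power2_eq_square algebra_simps)
    next
      case False
      show ?thesis unfolding W_even W_odd Zc_even Zc_odd ns_Suc D_def e_def y'_def S'_def
        using False by (simp add: power2_eq_square algebra_simps)
    qed
  qed
  also have "\<dots> = ns S' m * c * (1 - c) + e"
    using IH W_sum[of y' m] by (simp add: sum.distrib sum_distrib_left[symmetric])
  also have "\<dots> = ns S (Suc m) * c * (1 - c)"
    unfolding ns_Suc e_def S'_def by (simp add: algebra_simps)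
  finally show ?case .
qed

lemma W_cheb:
  assumes "\<And>k. 0 \<le> y k \<and> y k \<le> 1" "\<forall>k\<in>S. y k = c" "0 < \<tau>"
  shows "(\<Sum>b<2^m. W y m b * (if \<tau> \<le> \<bar>Zc S m b - ns S m * c\<bar> then 1 else 0)) \<le> ns S m * c * (1 - c) / \<tau>\<^sup>2"
proof -
  have "(\<Sum>b<2^m. W y m b * (if \<tau> \<le> \<bar>Zc S m b - ns S m * c\<bar> then 1 else 0))
     \<le> (\<Sum>b<2^m. W y m b * (Zc S m b - ns S m * c)\<^sup>2 / \<tau>\<^sup>2)"
  proof (rule sum_mono)
    fix b
    have W0: "0 \<le> W y m b" using W_nonneg assms(1) by blast
    have "(if \<tau> \<le> \<bar>Zc S m b - ns S m * c\<bar> then 1 else 0) \<le> (Zc S m b - ns S m * c)\<^sup>2 / \<tau>\<^sup>2"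
    proof (cases "\<tau> \<le> \<bar>Zc S m b - ns S m * c\<bar>")
      case True
      then have "\<tau>\<^sup>2 \<le> (Zc S m b - ns S m * c)\<^sup>2"
        using assms(3) by (metis abs_le_square_iff abs_of_pos)
      then show ?thesis using True assms(3) by simp
    qed simp
    then show "W y m b * (if \<tau> \<le> \<bar>Zc S m b - ns S m * c\<bar> then 1 else 0) \<le> W y m b * (Zc S m b - ns S m * c)\<^sup>2 / \<tau>\<^sup>2"
      using W0 by (metis mult_left_mono times_divide_eq_right)
  qed
  also have "\<dots> = (\<Sum>b<2^m. W y m b * (Zc S m b - ns S m * c)\<^sup>2) / \<tau>\<^sup>2"
    by (simp add: sum_divide_distrib)
  also have "\<dots> = ns S m * c * (1 - c) / \<tau>\<^sup>2" using W_var[OF assms(2)] by simp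
  finally show ?thesis .
qed




lemma sqrt_diff:
  assumes "0 \<le> a" "0 \<le> c" "\<bar>a - c\<bar> < e\<^sup>2" "0 \<le> e"
  shows "\<bar>sqrt a - sqrt c\<bar> \<le> e"
proof -
  have s: "a - c = (sqrt a - sqrt c) * (sqrt a + sqrt c)"
    using assms(1,2) by (simp add: algebra_simps)
  have "0 \<le> sqrt a" "0 \<le> sqrt c" using assms(1,2) by auto
  then have "\<bar>sqrt a - sqrt c\<bar> \<le> sqrt a + sqrt c" by linarith
  then have "\<bar>sqrt a - sqrt c\<bar> * \<bar>sqrt a - sqrt c\<bar> \<le> \<bar>sqrt a - sqrt c\<bar> * (sqrt a + sqrt c)"
    by (intro mult_left_mono) auto
  also have "\<dots> = \<bar>a - c\<bar>" unfolding s using assms(1,2) by (simp add: abs_mult)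
  finally have "\<bar>sqrt a - sqrt c\<bar>\<^sup>2 < e\<^sup>2" using assms(3) by (simp add: power2_eq_square)
  then show ?thesis using assms(4) power_less_imp_less_base[of "\<bar>sqrt a - sqrt c\<bar>" 2 e] by simp
qed

lemma sum_add_split: "(\<Sum>k<a+b. g k) = (\<Sum>k<a. g k) + (\<Sum>t<b. g (a + t::nat))"
  by (induction b) (simp_all add: ac_simps)

lemma sum_blocks: "(\<Sum>k<d*N. g k) = (\<Sum>j<d. \<Sum>t<N. g (j*N + t::nat))"
proof (induction d)
  case 0 then show ?case by simp
next
  case (Suc d)
  have "(\<Sum>k<Suc d * N. g k) = (\<Sum>k<d*N + N. g k)" by (simp add: add.commute)
  also have "\<dots> = (\<Sum>k<d*N. g k) + (\<Sum>t<N. g (d*N + t))" by (rule sum_add_split)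
  finally show ?case using Suc by simp
qed

lemma ns_block:
  assumes "j < d" "0 < N"
  shows "ns {k. k div N = j} (d*N) = real N"
proof -
  have "ns {k. k div N = j} (d*N) = (\<Sum>j'<d. \<Sum>t<N. if (j'*N + t) div N = j then 1 else 0)"
    unfolding ns_def sum_blocks by simp
  also have "\<dots> = (\<Sum>j'<d. if j' = j then real N else 0)"
  proof (rule sum.cong[OF refl])
    fix j' show "(\<Sum>t<N. if (j'*N + t) div N = j then 1 else 0) = (if j' = j then real N else 0)"
    proof -
      have "\<And>t. t < N \<Longrightarrow> (j'*N + t) div N = j'" using assms(2) by simp
      then have "(\<Sum>t<N. if (j'*N + t) div N = j then 1 else (0::real)) = (\<Sum>t<N. if j' = j then 1 else 0)"
        by (intro sum.cong) auto
      then show ?thesis by simp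
    qed
  qed
  also have "\<dots> = real N" using assms(1) by simp
  finally show ?thesis .
qed


lemma cheb_bound:
  assumes "0 < N" "0 < \<eta>" "0 \<le> c" "c \<le> 1"
  shows "real N * c * (1 - c) / (real N * \<eta>\<^sup>2)\<^sup>2 \<le> 1 / (4 * real N * \<eta>^4)"
proof -
  have c4: "c * (1 - c) \<le> 1/4" using power2_diff[of c "1/2"] zero_le_power2[of "c - 1/2"]
    by (simp add: algebra_simps power2_eq_square)
  have "real N * c * (1 - c) / (real N * \<eta>\<^sup>2)\<^sup>2 = (c * (1 - c)) / (real N * \<eta>^4)"
    using assms(1,2) by (simp add: power2_eq_square power4_eq_xxxx field_simps)
  also have "\<dots> \<le> (1/4) / (real N * \<eta>^4)"
    using c4 assms(1,2) by (intro divide_right_mono) auto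
  also have "\<dots> = 1 / (4 * real N * \<eta>^4)" by simp
  finally show ?thesis .
qed

lemma approx:
  fixes f :: "(nat \<Rightarrow> real) \<Rightarrow> real" and x :: "nat \<Rightarrow> real"
  assumes N: "0 < N" and eta: "0 < \<eta>" and eps: "0 < \<epsilon>"
    and U: "\<forall>x\<in>unit_cube d. \<forall>z\<in>unit_cube d. (\<forall>j<d. \<bar>x j - z j\<bar> \<le> \<eta>) \<longrightarrow> \<bar>f x - f z\<bar> < \<epsilon>/2"
    and fr: "f ` unit_cube d \<subseteq> {-1..1}"
    and x: "x \<in> unit_cube d"
    and NL: "real d / (\<epsilon> * \<eta>^4) \<le> real N"
  shows "\<bar>f x - (\<Sum>b<2^(d*N). W (\<lambda>k. (x (k div N))\<^sup>2) (d*N) b *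
            f (\<lambda>j. if j < d then sqrt (Zc {k. k div N = j} (d*N) b / real N) else 0))\<bar> \<le> \<epsilon>"
proof -
  define m where "m = d * N"
  define y where "y = (\<lambda>k. (x (k div N))\<^sup>2)"
  define S where "S = (\<lambda>j. {k. k div N = j})"
  define xh where "xh = (\<lambda>b j. if j < d then sqrt (Zc (S j) m b / real N) else 0)"
  define \<tau> where "\<tau> = real N * \<eta>\<^sup>2"
  define ind where "ind = (\<lambda>j b. if \<tau> \<le> \<bar>Zc (S j) m b - ns (S j) m * (x j)\<^sup>2\<bar> then 1 else (0::real))"
  have tau: "0 < \<tau>" using N eta by (simp add: \<tau>_def)
  have x01: "0 \<le> x j \<and> x j \<le> 1" for j
    using x by (cases "j < d") (auto simp: unit_cube_def)
  have y01: "0 \<le> y k \<and> y k \<le> 1" for k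
    using x01[of "k div N"] by (simp add: y_def power_le_one)
  have Wn: "0 \<le> W y m b" for b using W_nonneg y01 by blast
  have nsN: "ns (S j) m = real N" if "j < d" for j
    unfolding S_def m_def using ns_block[OF that N] .
  have xh_cube: "xh b \<in> unit_cube d" for b
  proof -
    have "0 \<le> sqrt (Zc (S j) m b / real N) \<and> sqrt (Zc (S j) m b / real N) \<le> 1" if "j < d" for j
    proof -
      have "0 \<le> Zc (S j) m b" "Zc (S j) m b \<le> real N" using Zc_bounds[of "S j" m b] nsN[OF that] by auto
      then show ?thesis using N by auto
    qed
    then show ?thesis unfolding unit_cube_def xh_def by auto
  qed
  have fx: "-1 \<le> f x \<and> f x \<le> 1" using fr x by auto
  have fxh: "-1 \<le> f (xh b) \<and> f (xh b) \<le> 1" for b using fr xh_cube[of b] by auto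
  have ind01: "0 \<le> ind j b" for j b by (simp add: ind_def)
  have pw: "\<bar>f x - f (xh b)\<bar> \<le> \<epsilon>/2 + 2 * (\<Sum>j<d. ind j b)" for b
  proof (cases "\<forall>j<d. ind j b = 0")
    case True
    have "\<bar>x j - xh b j\<bar> \<le> \<eta>" if j: "j < d" for j
    proof -
      have "ind j b = 0" using True j by auto
      then have "\<not> \<tau> \<le> \<bar>Zc (S j) m b - ns (S j) m * (x j)\<^sup>2\<bar>" by (simp add: ind_def split: if_splits)
      then have "\<bar>Zc (S j) m b - real N * (x j)\<^sup>2\<bar> < \<tau>"
        using nsN[OF j] by simp
      then have "\<bar>Zc (S j) m b / real N - (x j)\<^sup>2\<bar> < \<eta>\<^sup>2"
        using N by (simp add: \<tau>_def abs_less_iff field_simps)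
      moreover have "0 \<le> Zc (S j) m b / real N" using Zc_bounds[of "S j" m b] by simp
      ultimately have "\<bar>sqrt (Zc (S j) m b / real N) - sqrt ((x j)\<^sup>2)\<bar> \<le> \<eta>"
        using eta by (intro sqrt_diff) auto
      then show ?thesis using x01[of j] j by (simp add: xh_def abs_minus_commute)
    qed
    then have "\<bar>f x - f (xh b)\<bar> < \<epsilon>/2" using U x xh_cube[of b] by blast
    moreover have "0 \<le> (\<Sum>j<d. ind j b)" by (intro sum_nonneg) (simp add: ind01)
    ultimately show ?thesis by linarith
  next
    case False
    then obtain j where j: "j < d" "ind j b \<noteq> 0" by auto
    then have "ind j b = 1" by (simp add: ind_def split: if_splits)
    moreover have "ind j b \<le> (\<Sum>j<d. ind j b)"
      using j(1) by (intro member_le_sum) (auto simp: ind01)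
    ultimately have "1 \<le> (\<Sum>j<d. ind j b)" by simp
    moreover have "\<bar>f x - f (xh b)\<bar> \<le> 2" using fx fxh[of b] by auto
    ultimately show ?thesis using eps by linarith
  qed
  have cheb: "(\<Sum>b<2^m. W y m b * ind j b) \<le> 1 / (4 * real N * \<eta>^4)" if j: "j < d" for j
  proof -
    have "(\<Sum>b<2^m. W y m b * ind j b) \<le> ns (S j) m * (x j)\<^sup>2 * (1 - (x j)\<^sup>2) / \<tau>\<^sup>2"
      unfolding ind_def using W_cheb[of y "S j" "(x j)\<^sup>2" \<tau> m] y01 tau by (auto simp: S_def y_def)
    also have "\<dots> \<le> 1 / (4 * real N * \<eta>^4)"
      unfolding nsN[OF j] \<tau>_def using cheb_bound[OF N eta, of "(x j)\<^sup>2"] x01[of j]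
      by (simp add: power_le_one)
    finally show ?thesis .
  qed
  have "f x = (\<Sum>b<2^m. W y m b * f x)" using W_sum[of y m] by (simp add: sum_distrib_right[symmetric])
  then have "f x - (\<Sum>b<2^m. W y m b * f (xh b)) = (\<Sum>b<2^m. W y m b * (f x - f (xh b)))"
    by (simp add: sum_subtractf algebra_simps)
  then have "\<bar>f x - (\<Sum>b<2^m. W y m b * f (xh b))\<bar> \<le> (\<Sum>b<2^m. \<bar>W y m b * (f x - f (xh b))\<bar>)"
    by (simp add: sum_abs)
  also have "\<dots> \<le> (\<Sum>b<2^m. W y m b * (\<epsilon>/2 + 2 * (\<Sum>j<d. ind j b)))"
    by (intro sum_mono) (simp add: abs_mult Wn mult_left_mono pw)
  also have "\<dots> = \<epsilon>/2 * (\<Sum>b<2^m. W y m b) + 2 * (\<Sum>j<d. \<Sum>b<2^m. W y m b * ind j b)"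
    by (simp add: algebra_simps sum.distrib sum_distrib_left sum_distrib_right sum.swap[of _ "{..<d}"])
  also have "\<dots> \<le> \<epsilon>/2 * 1 + 2 * (\<Sum>j<d. 1 / (4 * real N * \<eta>^4))"
  proof -
    have "(\<Sum>j<d. \<Sum>b<2^m. W y m b * ind j b) \<le> (\<Sum>j<d. 1 / (4 * real N * \<eta>^4))"
      using cheb by (intro sum_mono) auto
    then show ?thesis using W_sum[of y m] by simp
  qed
  also have "\<dots> = \<epsilon>/2 + real d / (2 * real N * \<eta>^4)" by simp
  also have "\<dots> \<le> \<epsilon>"
  proof -
    have "real d \<le> real N * (\<epsilon> * \<eta>^4)" using NL eps eta by (simp add: pos_divide_le_eq)
    then have h: "real d / (real N * \<eta>^4) \<le> \<epsilon>" using N eta by (simp add: field_simps)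
    have eq: "real d / (2 * real N * \<eta>^4) = (real d / (real N * \<eta>^4)) / 2" by simp
    have hl: "\<And>a e::real. a \<le> e \<Longrightarrow> e/2 + a/2 \<le> e" by linarith
    show ?thesis unfolding eq by (rule hl[OF h])
  qed
  finally show ?thesis unfolding m_def y_def xh_def S_def .
qed


lemma gates_valid:
  assumes "g \<in> set (enc_gates N (d*N) @ ucirc (d*N) 0)"
  shows "valid_gate (Suc (d*N)) d g"
proof -
  from assms consider "g \<in> set (enc_gates N (d*N))" | "g \<in> set (ucirc (d*N) 0)" by auto
  then show ?thesis
  proof cases
    case 1
    then obtain k where k: "k < d*N" "g = Enc (Suc k) (k div N)" by (auto simp: enc_gates_def)
    have "k div N < d" using k(1) by (intro less_mult_imp_div_less) simp
    then show ?thesis using k by (simp add: valid_gate_def)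
  next
    case 2
    from ucirc_gates[OF this] show ?thesis by (auto simp: valid_gate_def)
  qed
qed

lemma gates_params:
  assumes "g \<in> set (enc_gates N m @ ucirc m 0)"
  shows "gate_params g \<subseteq> {..<2^m}"
proof -
  from assms consider "g \<in> set (enc_gates N m)" | "g \<in> set (ucirc m 0)" by auto
  then show ?thesis
  proof cases
    case 1 then show ?thesis by (auto simp: enc_gates_def)
  next
    case 2 from ucirc_gates[OF this] show ?thesis by auto
  qed
qed

theorem theorem1:
  shows "\<exists>C>0. \<forall>(d::nat) (f::(nat \<Rightarrow> real) \<Rightarrow> real) (\<epsilon>::real).
     1 \<le> d \<longrightarrow> continuous_on (unit_cube d) f \<longrightarrow> f ` unit_cube d \<subseteq> {-1..1} \<longrightarrow> 0 < \<epsilon> \<longrightarrow>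
     (\<exists>(n::nat) (w::nat) (layers::gate list list) (\<theta>::nat \<Rightarrow> real).
        2 \<le> n \<and> valid_circuit w d layers \<and>
        real w \<le> C * real d * log 2 (real n) \<and>
        real (circuit_depth layers) \<le> C * real d * real n ^ d * log 2 (real n) \<and>
        real (num_params layers) \<le> C * real d * real n ^ d \<and>
        (\<forall>x\<in>unit_cube d. \<bar>f x - pqc_fn w \<theta> layers x\<bar> \<le> \<epsilon>))"
proof (rule exI[of _ 1], intro conjI allI impI)
  show "(0::real) < 1" by simp
next
  fix d :: nat and f :: "(nat \<Rightarrow> real) \<Rightarrow> real" and \<epsilon> :: real
  assume d1: "1 \<le> d" and fc: "continuous_on (unit_cube d) f" and fr: "f ` unit_cube d \<subseteq> {-1..1}"
    and eps: "0 < \<epsilon>"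
  obtain \<eta> where eta: "\<eta> > 0"
    and U: "\<forall>x\<in>unit_cube d. \<forall>z\<in>unit_cube d. (\<forall>j<d. \<bar>x j - z j\<bar> \<le> \<eta>) \<longrightarrow> \<bar>f x - f z\<bar> < \<epsilon>/2"
    using unif_cube[OF fc, of "\<epsilon>/2"] eps by auto
  define N where "N = nat \<lceil>real d / (\<epsilon> * \<eta>^4)\<rceil> + 1"
  have N0: "0 < N" by (simp add: N_def)
  have NL: "real d / (\<epsilon> * \<eta>^4) \<le> real N"
    unfolding N_def using real_nat_ceiling_ge[of "real d / (\<epsilon> * \<eta>^4)"] by simp
  define m where "m = d * N"
  have m1: "1 \<le> m" unfolding m_def using d1 N0 by simp
  define xh where "xh = (\<lambda>b j. if j < d then sqrt (Zc {k. k div N = j} (d*N) b / real N) else 0)"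
  define \<phi> where "\<phi> = (\<lambda>b. arccos (f (xh b)))"
  define gates where "gates = enc_gates N m @ ucirc m 0"
  define layers where "layers = map (\<lambda>g. [g]) gates"
  define \<theta> where "\<theta> = uth m \<phi> 0"
  define n :: nat where "n = 2 ^ Suc m"
  have logn: "log 2 (real n) = real (Suc m)"
  proof -
    have "real n = (2::real)^(Suc m)" by (simp add: n_def)
    moreover have "log 2 ((2::real)^(Suc m)) = real (Suc m)" by (rule log_pow_cancel) auto
    ultimately show ?thesis by simp
  qed
  have n2: "2 \<le> n" unfolding n_def by simp
  have nnd: "n \<le> n ^ d" using d1 n2 by (simp add: self_le_power)
  have valid: "valid_circuit (Suc m) d layers"
    unfolding valid_circuit_def layers_def using gates_valid[of _ N d] by (auto simp: gates_def m_def)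
  have w_bound: "real (Suc m) \<le> 1 * real d * log 2 (real n)"
    unfolding logn using d1 by simp
  have depth_bound: "real (circuit_depth layers) \<le> 1 * real d * real n ^ d * log 2 (real n)"
  proof -
    have len: "circuit_depth layers + 2 = m + 3 * 2^m"
      using ucirc_length[of m 0] by (simp add: circuit_depth_def layers_def gates_def enc_gates_def)
    have "m < 2^m" by (rule less_exp)
    moreover have "2 * n = 4 * 2^m" by (simp add: n_def)
    ultimately have "circuit_depth layers \<le> 2 * n" using len by linarith
    also have "\<dots> \<le> n ^ d * Suc m * d"
    proof -
      have "n * 2 \<le> n ^ d * Suc m" by (rule mult_le_mono) (use nnd m1 in auto)
      then have "2 * n \<le> n ^ d * Suc m" by (simp add: mult.commute)
      also have "\<dots> \<le> n ^ d * Suc m * d" using d1 by simp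
      finally show ?thesis by (simp add: mult.commute)
    qed
    finally have "real (circuit_depth layers) \<le> real (n ^ d * Suc m * d)" by (simp only: of_nat_le_iff)
    then show ?thesis unfolding logn by (simp add: algebra_simps)
  qed
  have param_bound: "real (num_params layers) \<le> 1 * real d * real n ^ d"
  proof -
    have "(\<Union>L\<in>set layers. \<Union>g\<in>set L. gate_params g) \<subseteq> {..<2^m}"
      unfolding layers_def gates_def using gates_params by fastforce
    then have "num_params layers \<le> 2^m" unfolding num_params_def
      using card_mono[of "{..<(2::nat)^m}"] by fastforce
    also have "(2::nat)^m \<le> n" unfolding n_def by simp
    also have "n \<le> n ^ d * d" using nnd d1 by (metis le_trans mult.right_neutral mult_le_mono2)
    finally have "real (num_params layers) \<le> real (n ^ d * d)" by (simp only: of_nat_le_iff)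
    then show ?thesis by (simp add: algebra_simps)
  qed
  have approx_all: "\<forall>x\<in>unit_cube d. \<bar>f x - pqc_fn (Suc m) \<theta> layers x\<bar> \<le> \<epsilon>"
  proof
    fix x assume x: "x \<in> unit_cube d"
    have x01: "0 \<le> x j \<and> x j \<le> 1" for j
      using x by (cases "j < d") (auto simp: unit_cube_def)
    have xh_cube: "xh b \<in> unit_cube d" for b
    proof -
      have "0 \<le> sqrt (Zc {k. k div N = j} (d*N) b / real N) \<and> sqrt (Zc {k. k div N = j} (d*N) b / real N) \<le> 1" if "j < d" for j
      proof -
        have "0 \<le> Zc {k. k div N = j} (d*N) b" "Zc {k. k div N = j} (d*N) b \<le> real N"
          using Zc_bounds[of "{k. k div N = j}" "d*N" b] ns_block[OF that N0] by auto
        then show ?thesis using N0 by auto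
      qed
      then show ?thesis unfolding unit_cube_def xh_def by auto
    qed
    have cosphi: "cos (\<phi> b) = f (xh b)" for b
    proof -
      have "-1 \<le> f (xh b) \<and> f (xh b) \<le> 1" using fr xh_cube[of b] by auto
      then show ?thesis unfolding \<phi>_def by (simp add: cos_arccos)
    qed
    have "pqc_fn (Suc m) \<theta> layers x = (\<Sum>b<2^m. W (\<lambda>k. (x (k div N))\<^sup>2) m b * cos (\<phi> b))"
      unfolding \<theta>_def layers_def gates_def by (rule full_circuit) (use x01 in auto)
    also have "\<dots> = (\<Sum>b<2^(d*N). W (\<lambda>k. (x (k div N))\<^sup>2) (d*N) b *
            f (\<lambda>j. if j < d then sqrt (Zc {k. k div N = j} (d*N) b / real N) else 0))"
      unfolding cosphi m_def xh_def ..
    finally show "\<bar>f x - pqc_fn (Suc m) \<theta> layers x\<bar> \<le> \<epsilon>"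
      using approx[OF N0 eta eps U fr x NL] by simp
  qed
  show "\<exists>(n::nat) (w::nat) (layers::gate list list) (\<theta>::nat \<Rightarrow> real).
        2 \<le> n \<and> valid_circuit w d layers \<and>
        real w \<le> 1 * real d * log 2 (real n) \<and>
        real (circuit_depth layers) \<le> 1 * real d * real n ^ d * log 2 (real n) \<and>
        real (num_params layers) \<le> 1 * real d * real n ^ d \<and>
        (\<forall>x\<in>unit_cube d. \<bar>f x - pqc_fn w \<theta> layers x\<bar> \<le> \<epsilon>)"
    using n2 valid w_bound depth_bound param_bound approx_all by blast
qed


end
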